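(* Let $p>3$ be a prime and let $$F(p-1,p-1)=\frac{4p-3}{2^{6p-6}}\binom{4p-4}{2p-2}\binom{2p-2}{p-1}.$$ Then $F(p-1,p-1)\equiv -3p^2-12p^3+18p^3q_p(2)\pmod{p^4}$.
   Context: $q_p(2)=(2^{p-1}-1)/p$ is the Fermat quotient. (This is the value at $n=k=p-1$ of $F(n,k)=\frac{6n-2k+1}{2^{8n-2k}}\frac{\binom{2n}{n}\binom{2n+2k}{n+k}\binom{2n-2k}{n-k}\binom{n+k}{n}}{\binom{2k}{k}}$.) For rationals $a,b$, $a\equiv b\pmod{p^m}$ means $a-b=p^m c$ with $c$ a rational whose denominator is prime to $p$. *)

theory Defs
  imports Complex_Main "HOL-Computational_Algebra.Primes"
begin

definition rat_cong :: "rat \<Rightarrow> rat \<Rightarrow> nat \<Rightarrow> nat \<Rightarrow> bool" where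
  "rat_cong a b p m \<longleftrightarrow>
     (\<exists>c::rat. a - b = (of_nat p) ^ m * c \<and> coprime (snd (quotient_of c)) (int p))"

definition fermat_quot2 :: "nat \<Rightarrow> rat" where
  "fermat_quot2 p = (2 ^ (p - 1) - 1) / of_nat p"

end

theory Submission
  imports Defs "HOL-Number_Theory.Number_Theory"
begin

lemma bin_rel:
  assumes "m \<ge> 1"
  shows "m^2 * ((2*m) choose m) = 2*m*(2*m-1) * ((2*m-2) choose (m-1))"
proof -
  obtain k where m: "m = Suc k" using assms by (cases m) auto
  have 1: "m * ((2*m) choose m) = (2*m) * ((2*m-1) choose (m-1))"
    using binomial_absorption[of k "2*m"] by (simp add: m)
  have s: "(2*m-1) choose (m-1) = (2*m-1) choose m"
    using binomial_symmetric[of "m-1" "2*m-1"] m by simp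
  have 2: "m * ((2*m-1) choose m) = (2*m-1) * ((2*m-2) choose (m-1))"
    using binomial_absorption[of k "2*m-1"] m by (simp add: numeral_2_eq_2)
  have "m^2 * ((2*m) choose m) = m * (m * ((2*m) choose m))"
    by (simp add: power2_eq_square)
  also have "\<dots> = (2*m) * (m * ((2*m-1) choose m))" using 1 s by simp
  also have "\<dots> = (2*m) * ((2*m-1) * ((2*m-2) choose (m-1)))" using 2 by simp
  finally show ?thesis by simp
qed

lemma p_dvd_choose:
  assumes "prime p" "j \<noteq> 0" "j \<noteq> p"
  shows "p dvd (p choose j)"
proof (cases "j < p")
  case True thus ?thesis using dvd_choose_prime[of j p] assms prime_gt_0_nat by auto
next
  case False thus ?thesis using assms by (simp add: binomial_eq_0)
qed

lemma p_dvd_choose2: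
  assumes "prime p" "k \<noteq> 0" "k \<noteq> p" "k \<noteq> 2*p"
  shows "p dvd ((2*p) choose k)"
proof -
  have "(2*p) choose k = (\<Sum>j\<le>k. (p choose j) * (p choose (k - j)))"
    using vandermonde[of p p k] by (simp add: mult_2)
  also have "p dvd \<dots>"
  proof (rule dvd_sum)
    fix j assume "j \<in> {..k}"
    hence "j \<le> k" by simp
    show "p dvd (p choose j) * (p choose (k - j))"
    proof (cases "j = 0 \<or> j = p")
      case True
      hence "k - j \<noteq> 0 \<and> k - j \<noteq> p" using assms \<open>j \<le> k\<close> by auto
      thus ?thesis using p_dvd_choose[OF assms(1)] by auto
    next
      case False thus ?thesis using p_dvd_choose[OF assms(1)] by auto
    qed
  qed
  finally show ?thesis .
qed

lemma A_cong:
  assumes "prime p"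
  shows "[(2*p) choose p = 2] (mod p^2)"
proof -
  have p0: "p \<noteq> 0" using assms prime_gt_0_nat by auto
  let ?g = "\<lambda>k. if k \<in> {0,p} then (p choose k)^2 else 0"
  have "(2*p) choose p = (\<Sum>k\<le>p. (p choose k)^2)" using choose_square_sum[of p] by simp
  also have "[\<dots> = (\<Sum>k\<le>p. ?g k)] (mod p^2)"
  proof (rule cong_sum)
    fix k assume "k \<in> {..p}"
    show "[(p choose k)^2 = ?g k] (mod p^2)"
    proof (cases "k \<in> {0,p}")
      case False
      hence "p dvd (p choose k)" using p_dvd_choose[OF assms] by auto
      hence "p^2 dvd (p choose k)^2" by (simp add: power_mono_iff dvd_power_same)
      thus ?thesis using False by (simp add: cong_0_iff)
    qed simp
  qed
  also have "(\<Sum>k\<le>p. ?g k) = (\<Sum>k\<in>{0,p}. ?g k)"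
    by (rule sum.mono_neutral_right) auto
  also have "\<dots> = 2" using p0 by simp
  finally show ?thesis .
qed

lemma B_cong:
  assumes "prime p"
  shows "[(4*p) choose (2*p) = 6] (mod p^2)"
proof -
  have p0: "p \<noteq> 0" using assms prime_gt_0_nat by auto
  let ?g = "\<lambda>k. if k \<in> {0,p,2*p} then ((2*p) choose k)^2 else 0"
  have "(4*p) choose (2*p) = (\<Sum>k\<le>2*p. ((2*p) choose k)^2)"
    using choose_square_sum[of "2*p"] by simp
  also have "[\<dots> = (\<Sum>k\<le>2*p. ?g k)] (mod p^2)"
  proof (rule cong_sum)
    fix k assume "k \<in> {..2*p}"
    show "[((2*p) choose k)^2 = ?g k] (mod p^2)"
    proof (cases "k \<in> {0,p,2*p}")
      case False
      hence "p dvd ((2*p) choose k)" using p_dvd_choose2[OF assms] by auto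
      hence "p^2 dvd ((2*p) choose k)^2" by (simp add: dvd_power_same)
      thus ?thesis using False by (simp add: cong_0_iff)
    qed simp
  qed
  also have "(\<Sum>k\<le>2*p. ?g k) = (\<Sum>k\<in>{0,p,2*p}. ?g k)"
    by (rule sum.mono_neutral_right) auto
  also have "\<dots> = 2 + ((2*p) choose p)^2" using p0 by simp
  also have "[\<dots> = 2 + 2^2] (mod p^2)"
    by (intro cong_add cong_refl cong_pow A_cong assms)
  finally show ?thesis by simp
qed


lemma denom_coprime:
  fixes N D :: int
  assumes "D \<noteq> 0" "coprime D (int p)"
  shows "coprime (snd (quotient_of (of_int N / of_int D :: rat))) (int p)"
proof -
  obtain n d where qd: "quotient_of (of_int N / of_int D :: rat) = (n, d)"
    by (cases "quotient_of (of_int N / of_int D :: rat)") auto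
  have d0: "d > 0" using quotient_of_denom_pos[OF qd] .
  have "(of_int N / of_int D :: rat) = of_int n / of_int d" using quotient_of_div[OF qd] .
  hence "(of_int (N * d) :: rat) = of_int (n * D)" using d0 assms(1)
    by (simp add: field_simps)
  hence e: "N * d = n * D" by (simp only: of_int_eq_iff)
  have cnd: "coprime n d" using quotient_of_coprime[OF qd] .
  have "d dvd n * D" using e by (metis dvd_triv_right)
  hence "d dvd D" using cnd by (simp add: coprime_dvd_mult_right_iff coprime_commute)
  hence "coprime d (int p)" using assms(2) coprime_imp_coprime dvd_trans by blast
  thus ?thesis using qd by simp
qed

lemma field_aux:
  fixes d1 d2 d3 W P A B :: rat
  assumes "d1 \<noteq> 0" "d2 \<noteq> 0" "d3 \<noteq> 0" "W \<noteq> 0"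
  shows "d3/W * (d1*(P*B/d2)/(2*d3)) * (P*A/(2*d1)) = P^2*A*B/(4*d2*W)"
  using assms by (simp add: field_simps power2_eq_square)

theorem lemma2p1:
  fixes p :: nat
  assumes "prime p" and "p > 3"
  shows "rat_cong
    ((of_nat (4 * p - 3) / 2 ^ (6 * p - 6)) * of_nat ((4 * p - 4) choose (2 * p - 2))
       * of_nat ((2 * p - 2) choose (p - 1)))
    (- 3 * (of_nat p) ^ 2 - 12 * (of_nat p) ^ 3 + 18 * (of_nat p) ^ 3 * fermat_quot2 p)
    p 4"
proof -
  have p5: "p \<ge> 5"
  proof -
    have n4: "\<not> prime (4::nat)" using prime_product[of "2::nat" 2] by simp
    hence "p \<noteq> 4" using assms(1) by auto
    thus ?thesis using assms(2) by linarith
  qed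
  define A where "A = (2*p) choose p"
  define B where "B = (4*p) choose (2*p)"
  define X where "X = (2*p-2) choose (p-1)"
  define Y where "Y = (4*p-4) choose (2*p-2)"
  define Z where "Z = (4*p-2) choose (2*p-1)"
  define a where "a = A div p^2"
  define b where "b = B div p^2"
  define t where "t = 2^(p-1) div p"
  have pp: "p^2 \<ge> 25" using p5 power_mono[of 5 p 2] by simp
  have hA: "A = 2 + p^2 * a"
  proof -
    have "A mod p^2 = 2 mod p^2" using A_cong[OF assms(1)] unfolding A_def cong_def .
    also have "\<dots> = 2" using pp by simp
    finally show ?thesis unfolding a_def by (metis div_mult_mod_eq add.commute mult.commute)
  qed
  have hB: "B = 6 + p^2 * b"
  proof -
    have "B mod p^2 = 6 mod p^2" using B_cong[OF assms(1)] unfolding B_def cong_def .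
    also have "\<dots> = 6" using pp by simp
    finally show ?thesis unfolding b_def by (metis div_mult_mod_eq add.commute mult.commute)
  qed
  have ht: "2^(p-1) = 1 + p * t"
  proof -
    have "\<not> p dvd 2" using dvd_imp_le[of p 2] p5 by auto
    hence "[2^(p-1) = 1] (mod p)" using fermat_theorem[OF assms(1)] by blast
    hence "2^(p-1) mod p = 1 mod p" unfolding cong_def .
    also have "\<dots> = 1" using p5 by simp
    finally show ?thesis unfolding t_def by (metis div_mult_mod_eq add.commute mult.commute)
  qed
  have r1: "p^2 * A = 2*p*(2*p-1) * X" unfolding A_def X_def using bin_rel[of p] p5 by simp
  have r2: "(2*p)^2 * B = 2*(2*p)*(4*p-1) * Z"
  proof -
    have e1: "2*(2*p) = 4*p" "4*p-1-1 = 4*p-2" "2*p - 1 = 2*p-1" by auto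
    have "2*(2*p) - 2 = 4*p-2" by simp
    show ?thesis unfolding B_def Z_def using bin_rel[of "2*p"] p5 by (simp add: e1)
  qed
  have r3: "(2*p-1)^2 * Z = (4*p-2)*(4*p-3) * Y"
  proof -
    have e: "2*(2*p-1) = 4*p-2" "4*p-2-1 = 4*p-3" "4*p-2-2 = 4*p-4" "2*p-1-1 = 2*p-2"
      using p5 by auto
    show ?thesis unfolding Y_def Z_def using bin_rel[of "2*p-1", unfolded e] p5 by simp
  qed
  define P where "P = (of_nat p :: rat)"
  define T where "T = (of_nat t :: rat)"
  define Ar where "Ar = (of_nat a :: rat)"
  define Br where "Br = (of_nat b :: rat)"
  define W where "W = (1 + P*T)^6"
  have P5: "P \<ge> 5" unfolding P_def using p5 by simp
  have nz: "P \<noteq> 0" "2*P-1 \<noteq> 0" "4*P-1 \<noteq> 0" "4*P-3 \<noteq> 0" "4*P-2 \<noteq> 0" using P5 by auto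
  have PT: "P*T \<ge> 0" unfolding T_def using P5 by (intro mult_nonneg_nonneg) auto
  have WP: "W > 0" unfolding W_def using PT by simp
  have cA: "(of_nat A :: rat) = 2 + P^2 * Ar" unfolding P_def Ar_def hA by simp
  have cB: "(of_nat B :: rat) = 6 + P^2 * Br" unfolding P_def Br_def hB by simp
  have q1: "P^2 * of_nat A = 2*P*(2*P-1) * (of_nat X :: rat)"
  proof -
    have "(of_nat (p^2 * A) :: rat) = of_nat (2*p*(2*p-1)*X)" by (simp only: r1)
    thus ?thesis unfolding P_def using p5 by (simp add: of_nat_diff)
  qed
  have q2: "(2*P)^2 * of_nat B = 2*(2*P)*(4*P-1) * (of_nat Z :: rat)"
  proof -
    have "(of_nat ((2*p)^2 * B) :: rat) = of_nat (2*(2*p)*(4*p-1)*Z)" by (simp only: r2)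
    thus ?thesis unfolding P_def using p5 by (simp add: of_nat_diff)
  qed
  have q3: "(2*P-1)^2 * of_nat Z = (4*P-2)*(4*P-3) * (of_nat Y :: rat)"
  proof -
    have "(of_nat ((2*p-1)^2 * Z) :: rat) = of_nat ((4*p-2)*(4*p-3)*Y)" by (simp only: r3)
    thus ?thesis unfolding P_def using p5 by (simp add: of_nat_diff)
  qed
  have X': "(of_nat X :: rat) = P * of_nat A / (2*(2*P-1))"
  proof -
    have "P*(P * of_nat A) = P*(2*(2*P-1) * (of_nat X :: rat))" using q1 unfolding power2_eq_square
      by (simp only: mult.assoc mult.left_commute mult.commute)
    hence "P * of_nat A = 2*(2*P-1) * (of_nat X :: rat)" using nz(1) by simp
    thus ?thesis using nz by (simp add: eq_divide_eq mult.commute)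
  qed
  have Z': "(of_nat Z :: rat) = P * of_nat B / (4*P-1)"
  proof -
    have "(4*P)*(P * of_nat B) = (4*P)*((4*P-1) * (of_nat Z :: rat))" using q2 unfolding power2_eq_square
      by (simp only: mult.assoc mult.left_commute mult.commute)
    hence "P * of_nat B = (4*P-1) * (of_nat Z :: rat)" using nz(1) by simp
    thus ?thesis using nz by (simp add: eq_divide_eq mult.commute)
  qed
  have Y': "(of_nat Y :: rat) = (2*P-1) * of_nat Z / (2*(4*P-3))"
  proof -
    have "(2*P-1)^2 * of_nat Z = (2*P-1) * (2*(4*P-3) * (of_nat Y :: rat))"
      using q3 by (simp add: algebra_simps)
    hence "(2*P-1) * of_nat Z = 2*(4*P-3) * (of_nat Y :: rat)" using nz
      by (simp add: power2_eq_square)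
    thus ?thesis using nz by (simp add: field_simps)
  qed
  have pw: "(2::rat)^(6*p-6) = W"
  proof -
    have "(2::rat)^(6*p-6) = ((2::rat)^(p-1))^6"
      by (simp add: power_mult[symmetric] diff_mult_distrib mult.commute)
    also have "(2::rat)^(p-1) = of_nat (2^(p-1))" by simp
    also have "\<dots> = 1 + P*T" unfolding ht P_def T_def by simp
    finally show ?thesis unfolding W_def .
  qed
  have fq: "fermat_quot2 p = T"
  proof -
    have "(2::rat)^(p-1) = of_nat (2^(p-1))" by simp
    also have "\<dots> = 1 + P*T" unfolding ht P_def T_def by simp
    finally show ?thesis unfolding fermat_quot2_def using nz by (simp add: P_def[symmetric])
  qed
  have c43: "(of_nat (4*p-3) :: rat) = 4*P-3" unfolding P_def using p5 by (simp add: of_nat_diff)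
  have F: "(of_nat (4 * p - 3) / 2 ^ (6 * p - 6)) * of_nat Y * (of_nat X :: rat)
      = P^2 * of_nat A * of_nat B / (4*(4*P-1)*W)"
    unfolding c43 pw X' Y' Z' using nz WP by (intro field_aux) auto
  define R where "R = 15*T^2 + 20*P*T^3 + 15*P^2*T^4 + 6*P^3*T^5 + P^4*T^6"
  define Qr where "Qr = 2*Br + 6*Ar + P^2*Ar*Br + 4*(48 - 72*T + 108*T^2 + 288*P*T - 432*P*T^2)
      + 4*(3+12*P-18*P*T)*(4*P-1)*R"
  have poly: "P^2 * (2 + P^2 * Ar) * (6 + P^2 * Br) + (3*P^2 + 12*P^3 - 18*P^3*T) * (4*(4*P-1)*W)
     = P^4 * Qr"
    unfolding Qr_def R_def W_def by (simp add: algebra_simps eval_nat_numeral)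
  define ip where "ip = int p"
  define it where "it = int t"
  define Ri where "Ri = 15*it^2 + 20*ip*it^3 + 15*ip^2*it^4 + 6*ip^3*it^5 + ip^4*it^6"
  define Qi where "Qi = 2*int b + 6*int a + ip^2*int a*int b + 4*(48 - 72*it + 108*it^2 + 288*ip*it - 432*ip*it^2)
      + 4*(3+12*ip-18*ip*it)*(4*ip-1)*Ri"
  define Di where "Di = 4*(4*ip-1)*(1+ip*it)^6"
  have QQ: "(of_int Qi :: rat) = Qr"
    unfolding Qi_def Qr_def Ri_def R_def ip_def it_def P_def T_def Ar_def Br_def by simp
  have DD: "(of_int Di :: rat) = 4*(4*P-1)*W"
    unfolding Di_def W_def ip_def it_def P_def T_def by simp
  have Dnz: "Di \<noteq> 0"
  proof -
    have "(of_int Di :: rat) \<noteq> 0" unfolding DD using nz WP by simp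
    thus ?thesis by auto
  qed
  have pri: "prime ip" unfolding ip_def using assms(1) by simp
  have ip5: "ip \<ge> 5" unfolding ip_def using p5 by simp
  have Dcop: "coprime Di (int p)"
  proof -
    have n1: "\<not> ip dvd 4"
    proof
      assume "ip dvd 4" hence "ip \<le> 4" by (rule zdvd_imp_le) simp
      thus False using ip5 by simp
    qed
    have n2: "\<not> ip dvd (4*ip - 1)"
    proof
      assume "ip dvd (4*ip - 1)" hence "ip dvd 4*ip - (4*ip-1)" using dvd_diff[of ip "4*ip" "4*ip-1"] by simp
      hence "ip dvd 1" by simp
      thus False using ip5 by simp
    qed
    have n3: "\<not> ip dvd (1 + ip*it)"
    proof
      assume "ip dvd (1 + ip*it)" hence "ip dvd (1 + ip*it) - ip*it" using dvd_diff[of ip "1+ip*it" "ip*it"] by simp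
      hence "ip dvd 1" by simp
      thus False using ip5 by simp
    qed
    have n4: "\<not> ip dvd (1 + ip*it)^6" using n3 pri prime_dvd_power by blast
    have "\<not> ip dvd 4*(4*ip-1)" using n1 n2 pri prime_dvd_mult_iff by blast
    hence "\<not> ip dvd Di" unfolding Di_def using n4 pri prime_dvd_mult_iff by blast
    hence "coprime ip Di" using prime_imp_coprime[OF pri] by blast
    thus ?thesis unfolding ip_def by (simp add: coprime_commute)
  qed
  show ?thesis unfolding rat_cong_def
  proof (intro exI conjI)
    show "coprime (snd (quotient_of (of_int Qi / of_int Di :: rat))) (int p)"
      by (rule denom_coprime[OF Dnz Dcop])
    have "(of_nat (4 * p - 3) / 2 ^ (6 * p - 6)) * of_nat Y * (of_nat X :: rat)
       - (- 3 * P ^ 2 - 12 * P ^ 3 + 18 * P ^ 3 * T)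
       = (P^2 * of_nat A * of_nat B + (3*P^2 + 12*P^3 - 18*P^3*T) * (4*(4*P-1)*W)) / (4*(4*P-1)*W)"
      unfolding F using nz WP by (simp add: field_simps)
    also have "\<dots> = P^4 * (of_int Qi / of_int Di)"
      unfolding QQ DD cA cB poly by simp
    finally show "(of_nat (4 * p - 3) / 2 ^ (6 * p - 6)) * of_nat ((4 * p - 4) choose (2 * p - 2))
       * of_nat ((2 * p - 2) choose (p - 1)) -
    (- 3 * (of_nat p) ^ 2 - 12 * (of_nat p) ^ 3 + 18 * (of_nat p) ^ 3 * fermat_quot2 p) =
    (of_nat p) ^ 4 * (of_int Qi / of_int Di)"
      unfolding fq Y_def X_def P_def .
  qed
qed

end
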